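(* Let $H$ be a digraph (possibly with loops), let $D$ be an $H$-colored $3$-quasi-transitive digraph, let $k \geq 5$, and let $(u,v)$ be an arc of $C_{H}^{k-1}(D)$. If $(u,v)$ is an asymmetric arc of $C_{H}^{k-1}(D)$ (i.e., $(v,u)\notin A(C_{H}^{k-1}(D))$), then $d_{D}(u,v) \leq 2$.
   Context: All digraphs are finite. A digraph $D$ is $3$-quasi-transitive if for all distinct $u,v\in V(D)$, whenever there is a directed $uv$-path of length $3$, $u$ and $v$ are joined by an arc (in some direction). $d_D(u,v)$ is the length of a shortest directed $uv$-path in $D$. $D$ has no loops and comes with a map $\rho: A(D)\to V(H)$. For a walk $W=(x_0,\ldots,x_n)$ in $D$, there is an obstruction on $x_i$ if $(\rho(x_{i-1},x_i),\rho(x_i,x_{i+1})) \notin A(H)$; for an open walk this is considered at internal vertices $x_i$, $1\le i\le n-1$, for a closed walk at all $i\in\{0,\ldots,n-1\}$ with indices modulo $n$. $O_H(W)$ is the set of indices with an obstruction; the $H$-length is $l_H(W)=|O_H(W)|+1$ for open $W$ and $|O_H(W)|$ for closed $W$. The $(k-1,H)$-closure $C_H^{k-1}(D)$ is the digraph on $V(D)$ in which $(x,y)$ is an arc iff there is a directed $xy$-path in $D$ of $H$-length at most $k-1$. *)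

theory Defs
  imports Main
begin

definition dwalk :: "('a \<times> 'a) set \<Rightarrow> 'a list \<Rightarrow> bool" where
  "dwalk A p \<longleftrightarrow> p \<noteq> [] \<and> (\<forall>i. Suc i < length p \<longrightarrow> (p ! i, p ! Suc i) \<in> A)"

definition dpath :: "('a \<times> 'a) set \<Rightarrow> 'a list \<Rightarrow> bool" where
  "dpath A p \<longleftrightarrow> dwalk A p \<and> distinct p"

definition walk_len :: "'a list \<Rightarrow> nat" where
  "walk_len p = length p - 1"

definition three_quasi_transitive :: "'a set \<Rightarrow> ('a \<times> 'a) set \<Rightarrow> bool" where
  "three_quasi_transitive V A \<longleftrightarrow>
     (\<forall>u\<in>V. \<forall>v\<in>V. u \<noteq> v \<longrightarrow>
        (\<exists>p. dpath A p \<and> hd p = u \<and> last p = v \<and> walk_len p = 3) \<longrightarrow>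
        (u, v) \<in> A \<or> (v, u) \<in> A)"

definition obstructions_open ::
    "('b \<times> 'b) set \<Rightarrow> ('a \<times> 'a \<Rightarrow> 'b) \<Rightarrow> 'a list \<Rightarrow> nat set" where
  "obstructions_open AH \<rho> p =
     {i. 1 \<le> i \<and> Suc i < length p \<and>
         (\<rho> (p ! (i - 1), p ! i), \<rho> (p ! i, p ! Suc i)) \<notin> AH}"

definition H_length_open ::
    "('b \<times> 'b) set \<Rightarrow> ('a \<times> 'a \<Rightarrow> 'b) \<Rightarrow> 'a list \<Rightarrow> nat" where
  "H_length_open AH \<rho> p = card (obstructions_open AH \<rho> p) + 1"

definition H_closure_arcs ::
    "'a set \<Rightarrow> ('a \<times> 'a) set \<Rightarrow> ('b \<times> 'b) set \<Rightarrow> ('a \<times> 'a \<Rightarrow> 'b) \<Rightarrow> nat \<Rightarrow> ('a \<times> 'a) set" where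
  "H_closure_arcs V A AH \<rho> m =
     {(x, y). x \<in> V \<and> y \<in> V \<and> x \<noteq> y \<and>
        (\<exists>p. dpath A p \<and> hd p = x \<and> last p = y \<and> H_length_open AH \<rho> p \<le> m)}"

end

theory Submission imports Defs begin

lemma dwalk_single[simp]: "dwalk A [a]" by (simp add: dwalk_def)

lemma dwalk_Cons2[simp]: "dwalk A (a#b#xs) \<longleftrightarrow> (a,b)\<in>A \<and> dwalk A (b#xs)"
  unfolding dwalk_def
proof (intro iffI conjI allI impI)
  assume h: "a # b # xs \<noteq> [] \<and> (\<forall>i. Suc i < length (a # b # xs) \<longrightarrow> ((a # b # xs) ! i, (a # b # xs) ! Suc i) \<in> A)"
  show "(a,b)\<in>A" using h[THEN conjunct2, rule_format, of 0] by simp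
  show "b#xs \<noteq> []" by simp
  fix i assume "Suc i < length (b#xs)"
  then show "((b # xs) ! i, (b # xs) ! Suc i) \<in> A" using h[THEN conjunct2, rule_format, of "Suc i"] by simp
next
  assume h: "(a, b) \<in> A \<and> b # xs \<noteq> [] \<and> (\<forall>i. Suc i < length (b # xs) \<longrightarrow> ((b # xs) ! i, (b # xs) ! Suc i) \<in> A)"
  show "a#b#xs \<noteq> []" by simp
  fix i assume "Suc i < length (a#b#xs)"
  then show "((a#b # xs) ! i, (a#b # xs) ! Suc i) \<in> A" using h by (cases i) auto
qed

lemma dwalk_take: "dwalk A p \<Longrightarrow> 0 < n \<Longrightarrow> dwalk A (take n p)"
  unfolding dwalk_def by auto

lemma dwalk_drop: "dwalk A p \<Longrightarrow> n < length p \<Longrightarrow> dwalk A (drop n p)"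
  unfolding dwalk_def by (auto simp: add.commute)

lemma dwalk_append: "dwalk A xs \<Longrightarrow> dwalk A ys \<Longrightarrow> (last xs, hd ys) \<in> A \<Longrightarrow> dwalk A (xs @ ys)"
  unfolding dwalk_def
proof (intro conjI allI impI)
  fix i assume a: "xs \<noteq> [] \<and> (\<forall>i. Suc i < length xs \<longrightarrow> (xs ! i, xs ! Suc i) \<in> A)"
    "ys \<noteq> [] \<and> (\<forall>i. Suc i < length ys \<longrightarrow> (ys ! i, ys ! Suc i) \<in> A)"
    "(last xs, hd ys) \<in> A" and i: "Suc i < length (xs @ ys)"
  consider "Suc i < length xs" | "Suc i = length xs" | "Suc i > length xs" by linarith
  then show "((xs @ ys) ! i, (xs @ ys) ! Suc i) \<in> A"
  proof cases
    case 1 then show ?thesis using a by (simp add: nth_append)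
  next
    case 2
    have e1: "(xs @ ys) ! i = last xs" using 2 a by (simp add: nth_append) (metis diff_Suc_1 last_conv_nth)
    have e2: "(xs @ ys) ! Suc i = hd ys" using 2 a by (simp add: nth_append hd_conv_nth)
    show ?thesis using e1 e2 a by simp
  next
    case 3
    then obtain j where j: "i = length xs + j" by (metis less_Suc_eq_le le_Suc_ex less_eq_Suc_le)
    then show ?thesis using a i 3 by (simp add: nth_append)
  qed
qed simp

lemma Hlen_le: "2 \<le> length q \<Longrightarrow> H_length_open AH \<rho> q \<le> length q - 1"
proof -
  assume "2 \<le> length q"
  have "obstructions_open AH \<rho> q \<subseteq> {1..<length q - 1}" unfolding obstructions_open_def by auto
  then have "card (obstructions_open AH \<rho> q) \<le> card {1..<length q - 1}"
    by (intro card_mono) simp_all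
  then have "card (obstructions_open AH \<rho> q) \<le> length q - 2" by simp
  then show ?thesis unfolding H_length_open_def using \<open>2 \<le> length q\<close> by linarith
qed

theorem corollary18:
  fixes V :: "'a set" and A :: "('a \<times> 'a) set"
    and VH :: "'b set" and AH :: "('b \<times> 'b) set"
    and \<rho> :: "'a \<times> 'a \<Rightarrow> 'b" and k :: nat and u v :: 'a
  assumes "finite V" and "A \<subseteq> V \<times> V" and "\<forall>x. (x, x) \<notin> A"
    and "finite VH" and "AH \<subseteq> VH \<times> VH"
    and "\<forall>a\<in>A. \<rho> a \<in> VH"
    and "three_quasi_transitive V A"
    and "k \<ge> 5"
    and "(u, v) \<in> H_closure_arcs V A AH \<rho> (k - 1)"
    and "(v, u) \<notin> H_closure_arcs V A AH \<rho> (k - 1)"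
  shows "\<exists>p. dpath A p \<and> hd p = u \<and> last p = v \<and> walk_len p \<le> 2"
proof (rule ccontr)
  assume neg: "\<not> ?thesis"
  from assms(9) obtain p0 where uv: "u\<in>V" "v\<in>V" "u\<noteq>v" and p0: "dpath A p0" "hd p0 = u" "last p0 = v"
    by (auto simp: H_closure_arcs_def)
  define P where "P q \<longleftrightarrow> dpath A q \<and> hd q = u \<and> last q = v" for q
  obtain p where Pp: "P p" and min: "\<forall>q. P q \<longrightarrow> length p \<le> length q"
    using ex_has_least_nat[of P p0 length] p0 unfolding P_def by blast
  have dist: "distinct p" and walk: "dwalk A p" and hd: "hd p = u" and last: "last p = v"
    using Pp unfolding P_def dpath_def by auto
  have ne: "p \<noteq> []" using walk dwalk_def by auto
  have hd0: "p ! 0 = u" using hd ne hd_conv_nth by metis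
  have lastn: "p ! (length p - 1) = v" using last ne last_conv_nth by metis
  have arc: "\<And>i. Suc i < length p \<Longrightarrow> (p!i, p!Suc i) \<in> A" using walk dwalk_def by auto
  have inV: "\<And>i. i < length p \<Longrightarrow> p!i \<in> V"
  proof -
    fix i assume i: "i < length p"
    show "p!i \<in> V"
    proof (cases "Suc i < length p")
      case True then show ?thesis using arc[OF True] assms(2) by auto
    next
      case False then have "i = length p - 1" using i by linarith
      then show ?thesis using lastn uv by simp
    qed
  qed
  have deq: "\<And>i j. i < length p \<Longrightarrow> j < length p \<Longrightarrow> (p!i = p!j) = (i = j)"
    using dist nth_eq_iff_index_eq by blast
  have chordless: "(p!i, p!j) \<notin> A" if ij: "Suc i < j" "j < length p" for i j
  proof
    assume ch: "(p!i, p!j) \<in> A"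
    define q where "q = take (Suc i) p @ drop j p"
    have "dwalk A q" unfolding q_def
    proof (rule dwalk_append)
      show "dwalk A (take (Suc i) p)" using dwalk_take walk by blast
      show "dwalk A (drop j p)" using dwalk_drop walk ij by blast
      have "last (take (Suc i) p) = p ! i" using ij by (simp add: take_Suc_conv_app_nth)
      moreover have "hd (drop j p) = p ! j" using ij by (simp add: hd_drop_conv_nth)
      ultimately show "(last (take (Suc i) p), hd (drop j p)) \<in> A" using ch by simp
    qed
    moreover have "distinct q" unfolding q_def using dist ij
      by (simp add: set_take_disj_set_drop_if_distinct)
    moreover have "hd q = u" unfolding q_def using hd ij by (cases p) auto
    moreover have "last q = v" unfolding q_def using last ij by simp
    ultimately have "P q" unfolding P_def dpath_def by simp
    moreover have "length q < length p" unfolding q_def using ij by simp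
    ultimately show False using min by fastforce
  qed
  have tri: "(p!(i+3), p!i) \<in> A" if i: "i + 3 < length p" for i
  proof -
    have "dpath A [p!i, p!(i+1), p!(i+2), p!(i+3)]"
      unfolding dpath_def using i arc[of i] arc[of "i+1"] arc[of "i+2"] deq
      by (auto simp: numeral_eq_Suc)
    moreover have "p!i \<noteq> p!(i+3)" using deq i by simp
    ultimately have "(p!i, p!(i+3)) \<in> A \<or> (p!(i+3), p!i) \<in> A"
      using assms(7)[unfolded three_quasi_transitive_def, rule_format, of "p!i" "p!(i+3)"] inV i
      by (force simp: walk_len_def)
    then show ?thesis using chordless[of i "i+3"] i by auto
  qed
  have key: "\<forall>i. i + 2*m + 3 < length p \<longrightarrow> (p!(i+2*m+3), p!i) \<in> A" for m
  proof (induction m)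
    case 0 then show ?case using tri by simp
  next
    case (Suc m)
    show ?case
    proof (intro allI impI)
      fix i assume i: "i + 2 * Suc m + 3 < length p"
      have a1: "(p!(i+2*Suc m+3), p!(i+2)) \<in> A" using Suc[rule_format, of "i+2"] i
        by (simp add: algebra_simps)
      have a2: "(p!(i+2), p!(i+3)) \<in> A" using arc[of "i+2"] i by (simp add: eval_nat_numeral)
      have a3: "(p!(i+3), p!i) \<in> A" using tri[of i] i by simp
      have "dpath A [p!(i+2*Suc m+3), p!(i+2), p!(i+3), p!i]"
        unfolding dpath_def using a1 a2 a3 i deq by auto
      moreover have "p!i \<noteq> p!(i+2*Suc m+3)" using deq i by simp
      ultimately have "(p!i, p!(i+2*Suc m+3)) \<in> A \<or> (p!(i+2*Suc m+3), p!i) \<in> A"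
        using assms(7)[unfolded three_quasi_transitive_def, rule_format, of "p!(i+2*Suc m+3)" "p!i"] inV i
        by (force simp: walk_len_def)
      then show "(p!(i+2*Suc m+3), p!i) \<in> A" using chordless[of i "i+2*Suc m+3"] i by auto
    qed
  qed
  define n where "n = length p - 1"
  have n3: "n \<ge> 3"
  proof (rule ccontr)
    assume "\<not> n \<ge> 3"
    then have "walk_len p \<le> 2" unfolding walk_len_def n_def by simp
    then show False using neg Pp unfolding P_def by blast
  qed
  have pn: "p!n = v" "length p = Suc n" using lastn n3 unfolding n_def by auto
  have bk: "\<exists>q. dpath A q \<and> hd q = v \<and> last q = u \<and> 2 \<le> length q \<and> length q \<le> 5"
  proof (cases "odd n")
    case True
    have "n = 2*((n-3) div 2)+3" using n3 True by presburger
    then obtain m where "n = 2*m+3" by blast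
    then have "(v, u) \<in> A" using key[of m] pn hd0 by (metis add_0 lessI)
    then show ?thesis using uv by (intro exI[of _ "[v,u]"]) (auto simp: dpath_def)
  next
    case False
    show ?thesis
    proof (cases "n = 4")
      case True
      have a1: "(p!4, p!1) \<in> A" using tri[of 1] pn True by simp
      have "dpath A [p!4, p!1, p!2, p!3, p!0]"
        unfolding dpath_def using a1 arc[of 1] arc[of 2] tri[of 0] pn True deq
        by (auto simp: numeral_eq_Suc)
      then show ?thesis using pn hd0 True by (intro exI[of _ "[p!4, p!1, p!2, p!3, p!0]"]) auto
    next
      case n4: False
      have "n = 2*((n-6) div 2)+6" using n3 False n4 by presburger
      then obtain m where m: "n = 2*m+6" by blast
      have a1: "(p!n, p!3) \<in> A" using key[of m, rule_format, of 3] m pn by (simp add: algebra_simps)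
      have "dpath A [p!n, p!3, p!0]"
        unfolding dpath_def using a1 tri[of 0] pn m deq by auto
      then show ?thesis using pn hd0 by (intro exI[of _ "[p!n, p!3, p!0]"]) auto
    qed
  qed
  then obtain q where q: "dpath A q" "hd q = v" "last q = u" "2 \<le> length q" "length q \<le> 5" by blast
  have "H_length_open AH \<rho> q \<le> k - 1" using Hlen_le[OF q(4), of AH \<rho>] q(5) assms(8) by linarith
  then have "(v, u) \<in> H_closure_arcs V A AH \<rho> (k - 1)" using q uv unfolding H_closure_arcs_def by auto
  then show False using assms(10) by simp
qed

end
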